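(* Let $N\ge3$, $p>p_S$, and let $y^*$ be the unique solution of $y''+\alpha y'-y+y^p-m^2e^{2mt}y=0$ with $y(t)\to1$ as $t\to-\infty$. Then, with $\nu:=\min\{p-1,1\}$, \[ (y^* )'(t)=\frac{m}{2(N-1)-3\theta}e^{2mt}+O\big(e^{2m(1+\nu)t}\big)\quad(t\to-\infty). \]
   Context: $\theta:=\frac{2}{p-1}$, $m:=\{\theta(N-2-\theta)\}^{-1/2}$, $\alpha:=m(N-2-2\theta)$, $p_S:=\frac{N+2}{N-2}$. *)

theory Defs
  imports "HOL-Analysis.Analysis" "HOL-Library.Landau_Symbols"
begin

definition theta :: "real \<Rightarrow> real" where
  "theta p = 2 / (p - 1)"

definition mconst :: "nat \<Rightarrow> real \<Rightarrow> real" where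
  "mconst N p = (theta p * (real N - 2 - theta p)) powr (-1/2)"

definition alpha :: "nat \<Rightarrow> real \<Rightarrow> real" where
  "alpha N p = mconst N p * (real N - 2 - 2 * theta p)"

definition p_S :: "nat \<Rightarrow> real" where
  "p_S N = (real N + 2) / (real N - 2)"

end

theory Submission
  imports Defs
begin


lemma mono_dec:
  fixes f f' :: "real \<Rightarrow> real"
  assumes "\<And>x. x < b \<Longrightarrow> (f has_real_derivative f' x) (at x)"
    and "\<And>x. x < b \<Longrightarrow> f' x \<le> 0" and "s \<le> t" and "t < b"
  shows "f t \<le> f s"
proof (rule DERIV_nonpos_imp_nonincreasing[OF assms(3)])
  fix x assume "s \<le> x" "x \<le> t"
  then have "x < b" using assms(4) by simp
  then show "\<exists>y. (f has_real_derivative y) (at x) \<and> y \<le> 0" using assms(1,2) by blast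
qed

lemma R_bound:
  fixes p x :: real
  assumes "p > 1" "1/2 \<le> x" "x \<le> 3/2"
  shows "\<bar>x powr p - 1 - p * (x - 1)\<bar> \<le> p * (p - 1) * ((1/2) powr (p-2) + (3/2) powr (p-2)) * (x - 1)^2"
proof (cases "x = 1")
  case True then show ?thesis by simp
next
  case False
  define diff :: "nat \<Rightarrow> real \<Rightarrow> real" where
    "diff = (\<lambda>n t. if n = 0 then t powr p else if n = 1 then p * t powr (p - 1) else p * (p - 1) * t powr (p - 2))"
  have D: "\<forall>m t. m < 2 \<and> 1/2 \<le> t \<and> t \<le> 3/2 \<longrightarrow> DERIV (diff m) t :> diff (Suc m) t"
  proof (intro allI impI)
    fix m :: nat and t :: real assume h: "m < 2 \<and> 1/2 \<le> t \<and> t \<le> 3/2"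
    then have tp: "t > 0" by auto
    have "m = 0 \<or> m = 1" using h by auto
    then show "DERIV (diff m) t :> diff (Suc m) t"
    proof
      assume "m = 0" then show ?thesis unfolding diff_def
        using tp by (auto intro!: derivative_eq_intros simp: )
    next
      assume "m = 1" then show ?thesis unfolding diff_def
        using tp by (auto intro!: derivative_eq_intros simp: algebra_simps)
    qed
  qed
  obtain t where t: "(if x < 1 then x < t \<and> t < 1 else 1 < t \<and> t < x)"
    and eq: "x powr p = (\<Sum>m<2. (diff m 1 / fact m) * (x - 1)^m) + (diff 2 t / fact 2) * (x - 1)^2"
    using Taylor[of 2 diff "\<lambda>x. x powr p" "1/2" "3/2" 1 x, OF _ _ D] assms False
    by (auto simp: diff_def)
  have tr: "1/2 \<le> t" "t \<le> 3/2" using t assms by (auto split: if_splits)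
  have eq2: "x powr p - 1 - p * (x - 1) = p * (p - 1) * t powr (p - 2) / 2 * (x - 1)^2"
    using eq by (simp add: diff_def numeral_2_eq_2 fact_2)
  have tb: "t powr (p-2) \<le> (1/2) powr (p-2) + (3/2) powr (p-2)"
  proof (cases "p \<ge> 2")
    case True
    then have "t powr (p-2) \<le> (3/2) powr (p-2)" using tr by (intro powr_mono2) auto
    then show ?thesis by (smt (verit) powr_ge_zero)
  next
    case False
    then have "t powr (p-2) \<le> (1/2) powr (p-2)" using tr by (intro powr_mono2') auto
    then show ?thesis by (smt (verit) powr_ge_zero)
  qed
  define S where "S = (1/2) powr (p-2) + (3/2) powr (p-2)"
  have Snn: "S \<ge> 0" unfolding S_def by simp
  have "t powr (p-2) / 2 \<le> S" using tb powr_ge_zero[of "1/2" "p-2"] powr_ge_zero[of "3/2" "p-2"] unfolding S_def by linarith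
  then have "p * (p - 1) * (t powr (p-2) / 2) \<le> p * (p - 1) * S" using assms by (intro mult_left_mono) auto
  then have h: "p * (p - 1) * (t powr (p-2) / 2) * (x - 1)^2 \<le> p * (p - 1) * S * (x - 1)^2"
    by (intro mult_right_mono) auto
  have "\<bar>p * (p - 1) * t powr (p - 2) / 2 * (x - 1)^2\<bar> = p * (p - 1) * (t powr (p - 2) / 2) * (x - 1)^2"
    using assms by simp
  then show ?thesis using eq2 h unfolding S_def by simp
qed

lemma mono_dec2:
  fixes f f' :: "real \<Rightarrow> real"
  assumes "\<And>x. x \<le> b \<Longrightarrow> (f has_real_derivative f' x) (at x)"
    and "\<And>x. x \<le> b \<Longrightarrow> f' x \<le> 0" and "s \<le> t" and "t \<le> b"
  shows "f t \<le> f s"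
proof (rule DERIV_nonpos_imp_nonincreasing[OF assms(3)])
  fix x assume "s \<le> x" "x \<le> t"
  then have "x \<le> b" using assms(4) by simp
  then show "\<exists>y. (f has_real_derivative y) (at x) \<and> y \<le> 0" using assms(1,2) by blast
qed



lemma key_alg:
  fixes a b c x y G :: real
  assumes "a > 0" "b > 0" "c \<ge> 0" "c * (2*b + a^2) = 2*a*b"
  shows "2*y*(G - a*y - b*x) + 2*b*x*y + c*(y*y + x*(G - a*y - b*x))
         \<le> -(a/2)*y^2 - (c*b/4)*x^2 + (2/a + c/b) * G^2"
proof -
  have i0: "-(a*x*y) \<le> (b/2)*x^2 + (a^2/(2*b))*y^2"
  proof -
    have "0 \<le> (b*x + a*y)^2" by simp
    then have "0 \<le> b^2*x^2 + 2*a*b*x*y + a^2*y^2" by (simp add: power2_eq_square algebra_simps)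
    then have "0 \<le> (b^2*x^2 + 2*a*b*x*y + a^2*y^2) / (2*b)" using assms by simp
    also have "\<dots> = (b/2)*x^2 + (a*x*y) + (a^2/(2*b))*y^2" using assms
      by (simp add: field_simps power2_eq_square)
    finally show ?thesis by linarith
  qed
  have i: "-(c*a*x*y) \<le> (c*b/2)*x^2 + (c*a^2/(2*b))*y^2"
    using mult_left_mono[OF i0 assms(3)] by (simp add: algebra_simps)
  have ii: "c + c*a^2/(2*b) = a" using assms by (simp add: field_simps)
  have iii: "2*y*G \<le> (a/2)*y^2 + (2/a)*G^2"
  proof -
    have "0 \<le> (a*y - 2*G)^2" by simp
    then have "0 \<le> (a^2*y^2 - 4*a*y*G + 4*G^2)/(2*a)" using assms by (simp add: power2_eq_square algebra_simps)
    also have "\<dots> = (a/2)*y^2 - 2*y*G + (2/a)*G^2" using assms by (simp add: field_simps power2_eq_square)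
    finally show ?thesis by linarith
  qed
  have iv0: "x*G \<le> (b/4)*x^2 + (1/b)*G^2"
  proof -
    have "0 \<le> (b*x - 2*G)^2" by simp
    then have "0 \<le> (b^2*x^2 - 4*b*x*G + 4*G^2)/(4*b)" using assms by (simp add: power2_eq_square algebra_simps)
    also have "\<dots> = (b/4)*x^2 - x*G + (1/b)*G^2" using assms by (simp add: field_simps power2_eq_square)
    finally show ?thesis by linarith
  qed
  have iv: "c*x*G \<le> (c*b/4)*x^2 + (c/b)*G^2"
    using mult_left_mono[OF iv0 assms(3)] by (simp add: algebra_simps)
  have e: "2*y*(G - a*y - b*x) + 2*b*x*y + c*(y*y + x*(G - a*y - b*x))
      = -2*a*y^2 + c*y^2 - (c*a*x*y) - c*b*x^2 + 2*y*G + c*x*G"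
    by (simp add: algebra_simps power2_eq_square)
  have "c*y^2 + (c*a^2/(2*b))*y^2 = a*y^2" using ii by (metis distrib_right)
  then show ?thesis using e i iii iv by (simp add: algebra_simps) 
qed


definition cL :: "real \<Rightarrow> real \<Rightarrow> real" where "cL a b = 2*a*b/(2*b+a^2)"
definition dL :: "real \<Rightarrow> real \<Rightarrow> real" where "dL a b = min (a/3) (cL a b/5)"
definition KL :: "real \<Rightarrow> real \<Rightarrow> real" where "KL a b = 2/a + cL a b/b"
definition eta0 :: "real \<Rightarrow> real \<Rightarrow> real" where "eta0 a b = min 1 (3*dL a b*b/(16*KL a b))"

lemma eta0_pos: "a > 0 \<Longrightarrow> b > 0 \<Longrightarrow> eta0 a b > 0"
proof -
  assume ab: "a > 0" "b > 0"
  have c: "cL a b > 0" unfolding cL_def using ab by (auto intro!: divide_pos_pos add_pos_pos)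
  then have d: "dL a b > 0" unfolding dL_def using ab by simp
  have k: "KL a b > 0" unfolding KL_def using ab c by (intro add_pos_pos divide_pos_pos) auto
  show ?thesis unfolding eta0_def using d k ab by simp
qed

lemma energy:
  fixes a b \<kappa> C B T0 :: real and w w' w'' g :: "real \<Rightarrow> real"
  assumes ab: "a > 0" "b > 0" and kp: "\<kappa> > 0"
  and dw: "\<And>t. t < T0 \<Longrightarrow> (w has_real_derivative w' t) (at t)"
  and dw': "\<And>t. t < T0 \<Longrightarrow> (w' has_real_derivative w'' t) (at t)"
  and eq: "\<And>t. t < T0 \<Longrightarrow> w'' t + a * w' t + b * w t = g t"
  and gb: "\<And>t. t < T0 \<Longrightarrow> \<bar>g t\<bar> \<le> C * exp (\<kappa> * t) + eta0 a b * \<bar>w t\<bar>"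
  and bw: "\<And>t. t < T0 \<Longrightarrow> \<bar>w t\<bar> \<le> B" and bw': "\<And>t. t < T0 \<Longrightarrow> \<bar>w' t\<bar> \<le> B"
  shows "\<exists>M. \<forall>t<T0. \<bar>w t\<bar> \<le> M * exp (\<kappa> * t) \<and> \<bar>w' t\<bar> \<le> M * exp (\<kappa> * t)"
proof -
  define c where "c = cL a b"
  define \<delta> where "\<delta> = dL a b"
  define K where "K = KL a b"
  define \<eta> where "\<eta> = eta0 a b"
  have cpos: "c > 0" unfolding c_def cL_def using ab by (auto intro!: divide_pos_pos add_pos_pos)
  have D: "2*b + a^2 \<noteq> 0" using ab by (smt (verit) zero_le_power2)
  have ceq: "c * (2*b + a^2) = 2*a*b" unfolding c_def cL_def using D by simp
  have c2: "c^2 \<le> b/2"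
  proof -
    have "(2*b + a^2)^2 \<ge> 8*a^2*b"
    proof -
      have "0 \<le> (2*b - a^2)^2" by simp
      then show ?thesis by (simp add: power2_eq_square algebra_simps)
    qed
    then have "c^2 * (8*a^2*b) \<le> c^2 * (2*b + a^2)^2" by (simp add: mult_left_mono)
    also have "\<dots> = (2*a*b)^2" using ceq by (metis power_mult_distrib)
    finally have "c^2 * (8*a^2*b) \<le> (b/2) * (8*a^2*b)" by (simp add: power2_eq_square algebra_simps)
    moreover have "8*a^2*b > 0" using ab by simp
    ultimately show ?thesis by (rule mult_right_le_imp_le)
  qed
  have dpos: "\<delta> > 0" and da: "\<delta> \<le> a/3" and dc: "\<delta> \<le> c/5"
    unfolding \<delta>_def dL_def c_def[symmetric] using ab cpos by auto
  have Kpos: "K > 0" unfolding K_def KL_def c_def[symmetric] using ab cpos by (intro add_pos_pos divide_pos_pos) auto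
  have etapos: "\<eta> > 0" unfolding \<eta>_def using eta0_pos ab by auto
  have eta1: "\<eta> \<le> 1" and eta2: "\<eta> \<le> 3*\<delta>*b/(16*K)"
    unfolding \<eta>_def eta0_def \<delta>_def K_def by auto
  have eta3: "2*K*\<eta>^2 \<le> 3*\<delta>*b/8"
  proof -
    have "\<eta>^2 \<le> \<eta> * (3*\<delta>*b/(16*K))" unfolding power2_eq_square using eta2 etapos by (intro mult_left_mono) auto
    also have "\<dots> \<le> 3*\<delta>*b/(16*K)" using eta1 eta2 etapos dpos ab Kpos
      by (intro mult_left_le_one_le) auto
    finally show ?thesis using Kpos by (simp add: field_simps)
  qed
  define V where "V t = (w' t)^2 + b*(w t)^2 + c*w t*w' t" for t
  have Vlow: "V t \<ge> (w' t)^2/2 + (3*b/4)*(w t)^2" for t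
  proof -
    have "0 \<le> (w' t + c*w t)^2" by simp
    then have "-(c*w t*w' t) \<le> (w' t)^2/2 + c^2*(w t)^2/2" by (simp add: power2_eq_square algebra_simps)
    moreover have "c^2*(w t)^2 \<le> (b/2)*(w t)^2" using c2 by (intro mult_right_mono) auto
    ultimately show ?thesis unfolding V_def by linarith
  qed
  have Vup: "V t \<le> (3/2)*(w' t)^2 + (5*b/4)*(w t)^2" for t
  proof -
    have "0 \<le> (w' t - c*w t)^2" by simp
    then have "(c*w t*w' t) \<le> (w' t)^2/2 + c^2*(w t)^2/2" by (simp add: power2_eq_square algebra_simps)
    moreover have "c^2*(w t)^2 \<le> (b/2)*(w t)^2" using c2 by (intro mult_right_mono) auto
    ultimately show ?thesis unfolding V_def by linarith
  qed
  define L where "L = 2*K*C^2"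
  have Lnn: "L \<ge> 0" unfolding L_def using Kpos by simp
  define V' where "V' t = 2*w' t*w'' t + 2*b*w t*w' t + c*(w' t*w' t + w t*w'' t)" for t
  have dV: "(V has_real_derivative V' t) (at t)" if "t < T0" for t
    unfolding V_def[abs_def] V'_def
    using dw[OF that] dw'[OF that]
    by (auto intro!: derivative_eq_intros simp: algebra_simps)
  have dVle: "V' t \<le> -(\<delta>/2) * V t + L * exp (2*\<kappa>*t)" if "t < T0" for t
  proof -
    define x y G where "x = w t" "y = w' t" "G = g t"
    have w2: "w'' t = G - a*y - b*x" using eq[OF that] unfolding x_y_G_def by linarith
    have "V' t = 2*y*(G - a*y - b*x) + 2*b*x*y + c*(y*y + x*(G - a*y - b*x))"
      unfolding V'_def w2 x_y_G_def by simp
    also have "\<dots> \<le> -(a/2)*y^2 - (c*b/4)*x^2 + K * G^2"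
      unfolding K_def KL_def c_def[symmetric] using key_alg[OF ab less_imp_le[OF cpos] ceq] by simp
    finally have s1: "V' t \<le> -(a/2)*y^2 - (c*b/4)*x^2 + K * G^2" .
    have s2: "\<delta> * V t \<le> (a/2)*y^2 + (c*b/4)*x^2"
    proof -
      have "\<delta> * V t \<le> \<delta> * ((3/2)*y^2 + (5*b/4)*x^2)" using Vup dpos unfolding x_y_G_def
        by (simp add: mult_left_mono)
      also have "\<dots> = (\<delta>*3/2)*y^2 + (\<delta>*5*b/4)*x^2" by (simp add: algebra_simps)
      also have "\<dots> \<le> (a/2)*y^2 + (c*b/4)*x^2"
      proof (rule add_mono)
        show "(\<delta>*3/2)*y^2 \<le> (a/2)*y^2" using da by (intro mult_right_mono) auto
        show "(\<delta>*5*b/4)*x^2 \<le> (c*b/4)*x^2" using dc ab by (intro mult_right_mono) auto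
      qed
      finally show ?thesis .
    qed
    define e where "e = exp (\<kappa>*t)"
    have e2: "e^2 = exp (2*\<kappa>*t)" unfolding e_def by (simp add: exp_double[symmetric] power2_eq_square mult.assoc exp_add[symmetric])
    have Gb: "\<bar>G\<bar> \<le> C*e + \<eta>*\<bar>x\<bar>" using gb[OF that] unfolding x_y_G_def e_def \<eta>_def by simp
    have G2: "G^2 \<le> 2*C^2*e^2 + 2*\<eta>^2*x^2"
    proof -
      have "G^2 = \<bar>G\<bar>^2" by simp
      also have "\<dots> \<le> (C*e + \<eta>*\<bar>x\<bar>)^2" using Gb by (intro power_mono) auto
      also have "\<dots> \<le> 2*C^2*e^2 + 2*\<eta>^2*x^2"
      proof -
        have "0 \<le> (C*e - \<eta>*\<bar>x\<bar>)^2" by simp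
        then show ?thesis by (simp add: power2_eq_square algebra_simps)
      qed
      finally show ?thesis .
    qed
    have s3: "K*G^2 \<le> L*exp (2*\<kappa>*t) + 2*K*\<eta>^2*x^2"
      using mult_left_mono[OF G2, of K] Kpos unfolding L_def e2[symmetric] by (simp add: algebra_simps)
    have s4: "2*K*\<eta>^2*x^2 \<le> (\<delta>/2) * V t"
    proof -
      have "2*K*\<eta>^2*x^2 \<le> (3*\<delta>*b/8)*x^2" using eta3 by (intro mult_right_mono) auto
      also have "\<dots> = (\<delta>/2)*((3*b/4)*x^2)" by simp
      also have "\<dots> \<le> (\<delta>/2) * V t"
      proof (intro mult_left_mono)
        show "(3*b/4)*x^2 \<le> V t" using Vlow[of t] zero_le_power2[of "w' t"] unfolding x_y_G_def by linarith
      qed (use dpos in auto)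
      finally show ?thesis .
    qed
    show ?thesis using s1 s2 s3 s4 by linarith
  qed
  define \<gamma> where "\<gamma> = \<delta>/2 + 2*\<kappa>"
  have gpos: "\<gamma> > 0" unfolding \<gamma>_def using dpos kp by simp
  define F where "F t = exp ((\<delta>/2)*t) * V t - L * exp (\<gamma>*t) / \<gamma>" for t
  define F' where "F' t = (\<delta>/2) * exp ((\<delta>/2)*t) * V t + exp ((\<delta>/2)*t) * V' t - L * exp (\<gamma>*t)" for t
  have dF: "(F has_real_derivative F' t) (at t)" if "t < T0" for t
    unfolding F_def[abs_def] F'_def using dV[OF that] gpos
    by (auto intro!: derivative_eq_intros simp: algebra_simps)
  have dFle: "F' t \<le> 0" if "t < T0" for t
  proof -
    have "exp ((\<delta>/2)*t) * ((\<delta>/2) * V t + V' t) \<le> exp ((\<delta>/2)*t) * (L * exp (2*\<kappa>*t))"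
      using dVle[OF that] by (intro mult_left_mono) auto
    also have "\<dots> = L * exp (\<gamma>*t)" unfolding \<gamma>_def by (simp add: exp_add[symmetric] algebra_simps)
    finally show ?thesis unfolding F'_def by (simp add: algebra_simps)
  qed
  define Vm where "Vm = (3/2)*B^2 + (5*b/4)*B^2"
  have Vm: "V s \<le> Vm" if "s < T0" for s
  proof -
    have "(w' s)^2 \<le> B^2" "(w s)^2 \<le> B^2"
      using bw'[OF that] bw[OF that] by (auto simp: abs_le_square_iff[symmetric] intro: order_trans[OF abs_ge_zero])
    then have "(5*b/4)*(w s)^2 \<le> (5*b/4)*B^2" using ab by (intro mult_left_mono) auto
    then show ?thesis using Vup[of s] \<open>(w' s)^2 \<le> B^2\<close> unfolding Vm_def by linarith
  qed
  have Vnn: "V s \<ge> 0" for s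
  proof -
    have "0 \<le> (3*b/4)*(w s)^2" using ab by simp
    then show ?thesis using Vlow[of s] zero_le_power2[of "w' s"] by linarith
  qed
  have Fle: "F t \<le> 0" if "t < T0" for t
  proof (rule ccontr)
    assume "\<not> F t \<le> 0"
    then have fp: "F t > 0" by simp
    have Vmnn: "Vm \<ge> 0" using Vm[OF that] Vnn[of t] by simp
    define r0 where "r0 = min t (ln (F t / (Vm + 1)) / (\<delta>/2))"
    have st: "r0 \<le> t" unfolding r0_def by simp
    have "r0 \<le> ln (F t / (Vm + 1)) / (\<delta>/2)" unfolding r0_def by simp
    then have "(\<delta>/2)* r0 \<le> ln (F t / (Vm + 1))" using dpos by (simp add: pos_le_divide_eq mult.commute)
    then have "exp ((\<delta>/2)* r0) \<le> exp (ln (F t / (Vm + 1)))" by simp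
    moreover have "F t / (Vm + 1) > 0" using fp Vmnn by simp
    ultimately have es: "exp ((\<delta>/2)* r0) \<le> F t / (Vm + 1)" by simp
    have "F r0 \<le> exp ((\<delta>/2)* r0) * V r0" unfolding F_def using Lnn gpos by simp
    also have "\<dots> \<le> (F t / (Vm + 1)) * Vm"
      using es Vm[of r0] st that Vnn[of r0] fp Vmnn by (intro mult_mono) auto
    also have "\<dots> < F t" using fp Vmnn by (simp add: field_simps)
    finally have "F r0 < F t" .
    moreover have "F t \<le> F r0" using mono_dec[of T0 F F', OF dF dFle st that] by simp
    ultimately show False by simp
  qed
  define Dc where "Dc = (2 + 4/(3*b)) * L / \<gamma>"
  have Dcnn: "Dc \<ge> 0" unfolding Dc_def using Lnn gpos ab by simp
  have Vb: "V t \<le> (L/\<gamma>) * exp (2*\<kappa>*t)" if "t < T0" for t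
  proof -
    have "exp ((\<delta>/2)*t) * V t \<le> L * exp (\<gamma>*t) / \<gamma>" using Fle[OF that] unfolding F_def by simp
    also have "\<dots> = exp ((\<delta>/2)*t) * ((L/\<gamma>) * exp (2*\<kappa>*t))" unfolding \<gamma>_def
      by (simp add: exp_add[symmetric] algebra_simps)
    finally have "exp ((\<delta>/2)*t) * V t \<le> exp ((\<delta>/2)*t) * ((L/\<gamma>) * exp (2*\<kappa>*t))" .
    then show ?thesis by (rule mult_left_le_imp_le) simp
  qed
  show ?thesis
  proof (intro exI allI impI)
    fix t assume t: "t < T0"
    have ee: "exp (2*\<kappa>*t) = (exp (\<kappa>*t))^2" by (metis exp_double mult.assoc)
    have L\<gamma>: "L/\<gamma> \<ge> 0" using Lnn gpos by simp
    have sq: "(sqrt Dc * exp (\<kappa>*t))^2 = Dc * exp (2*\<kappa>*t)"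
      by (simp only: power_mult_distrib real_sqrt_pow2[OF Dcnn] ee)
    have Dck: "Dc = 2*(L/\<gamma>) + (4/(3*b))*(L/\<gamma>)" unfolding Dc_def using gpos ab by (simp add: field_simps)
    have DcE: "Dc * exp (2*\<kappa>*t) = 2*(L/\<gamma>) * exp (2*\<kappa>*t) + (4/(3*b))*(L/\<gamma>) * exp (2*\<kappa>*t)"
      unfolding Dck by (simp only: distrib_right)
    have nn1: "0 \<le> 2*(L/\<gamma>) * exp (2*\<kappa>*t)" using L\<gamma> by (intro mult_nonneg_nonneg) auto
    have nn2: "0 \<le> (4/(3*b))*(L/\<gamma>) * exp (2*\<kappa>*t)" using L\<gamma> ab by (intro mult_nonneg_nonneg) auto
    have "0 \<le> (3*b/4)*(w t)^2" using ab by simp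
    then have "(w' t)^2 \<le> 2 * V t" using Vlow[of t] by linarith
    also have "\<dots> \<le> 2 * ((L/\<gamma>) * exp (2*\<kappa>*t))" using Vb[OF t] by simp
    also have "\<dots> \<le> Dc * exp (2*\<kappa>*t)" using DcE nn2 by (simp only: mult.assoc)
    finally have y2: "(w' t)^2 \<le> (sqrt Dc * exp (\<kappa>*t))^2" unfolding sq .
    have "(3*b/4)*(w t)^2 \<le> V t" using Vlow[of t] zero_le_power2[of "w' t"] by linarith
    then have "(w t)^2 \<le> (4/(3*b)) * V t" using ab by (simp add: field_simps)
    also have "\<dots> \<le> (4/(3*b)) * ((L/\<gamma>) * exp (2*\<kappa>*t))" using Vb[OF t] ab by (intro mult_left_mono) auto
    also have "\<dots> \<le> Dc * exp (2*\<kappa>*t)" using DcE nn1 by (simp only: mult.assoc)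
    finally have x2: "(w t)^2 \<le> (sqrt Dc * exp (\<kappa>*t))^2" unfolding sq .
    show "\<bar>w t\<bar> \<le> sqrt Dc * exp (\<kappa> * t) \<and> \<bar>w' t\<bar> \<le> sqrt Dc * exp (\<kappa> * t)"
    proof
      show "\<bar>w t\<bar> \<le> sqrt Dc * exp (\<kappa> * t)" by (rule power2_le_imp_le) (use x2 Dcnn in auto)
      show "\<bar>w' t\<bar> \<le> sqrt Dc * exp (\<kappa> * t)" by (rule power2_le_imp_le) (use y2 Dcnn in auto)
    qed
  qed
qed


lemma dbound_lower:
  fixes z z' z'' :: "real \<Rightarrow> real"
  assumes al: "al > 0" and T0: "T0 \<le> 0" and H: "H \<ge> 0"
    and dz: "\<And>t. t < T0 \<Longrightarrow> (z has_real_derivative z' t) (at t)"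
    and dz': "\<And>t. t < T0 \<Longrightarrow> (z' has_real_derivative z'' t) (at t)"
    and hb: "\<And>t. t < T0 \<Longrightarrow> z'' t + al * z' t \<ge> -H"
    and zb: "\<And>t. t < T0 \<Longrightarrow> \<bar>z t\<bar> \<le> Bz"
    and t0: "t0 < T0"
  shows "z' t0 \<ge> -H/al"
proof -
  define P where "P t = exp (al*t) * z' t + (H/al) * exp (al*t)" for t
  have dP: "((\<lambda>t. - P t) has_real_derivative (-(al*exp (al*t)*z' t + exp (al*t)*z'' t + (H/al)*(al*exp (al*t))))) (at t)"
    if "t < T0" for t
    unfolding P_def using dz'[OF that] by (auto intro!: derivative_eq_intros simp: algebra_simps)
  have dPs: "-(al*exp (al*t)*z' t + exp (al*t)*z'' t + (H/al)*(al*exp (al*t))) \<le> 0" if "t < T0" for t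
  proof -
    have "al*exp (al*t)*z' t + exp (al*t)*z'' t + (H/al)*(al*exp (al*t)) = exp (al*t) * (z'' t + al*z' t + H)"
      using al by (simp add: algebra_simps)
    moreover have "exp (al*t) * (z'' t + al*z' t + H) \<ge> 0" using hb[OF that] by simp
    ultimately show ?thesis by linarith
  qed
  have Pnn: "P t0 \<ge> 0"
  proof (rule ccontr)
    assume "\<not> P t0 \<ge> 0"
    define c where "c = - P t0"
    have cp: "c > 0" unfolding c_def using \<open>\<not> P t0 \<ge> 0\<close> by simp
    have zd: "z' s \<le> -c" if "s \<le> t0" for s
    proof -
      have s0: "s < T0" using that t0 by simp
      have "- P t0 \<le> - P s" by (rule mono_dec2[of t0 "\<lambda>t. - P t", OF dP dPs that order.refl]) (use t0 in auto)
      then have "exp (al * s) * z' s + (H/al) * exp (al * s) \<le> -c" unfolding c_def P_def by simp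
      moreover have "(H/al) * exp (al * s) \<ge> 0" using H al by simp
      ultimately have A: "exp (al * s) * z' s \<le> -c" by linarith
      have "al * s \<le> 0" using al s0 T0 by (intro mult_nonneg_nonpos) auto
      then have e1: "exp (al * s) \<le> 1" by simp
      show ?thesis
      proof (rule ccontr)
        assume "\<not> z' s \<le> -c"
        then have "-c * exp (al * s) < z' s * exp (al * s)" by (intro mult_strict_right_mono) auto
        moreover have "-c \<le> -c * exp (al * s)" using e1 cp by (simp add: mult_left_le_one_le)
        ultimately show False using A by (simp add: mult.commute)
      qed
    qed
    define s where "s = t0 - (2*\<bar>Bz\<bar> + 1)/c"
    have st: "s \<le> t0" unfolding s_def using cp by simp
    have "z t0 + c*t0 \<le> z s + c * s"
    proof (rule mono_dec2[of t0 "\<lambda>t. z t + c*t" "\<lambda>t. z' t + c", OF _ _ st order.refl])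
      fix x assume x: "x \<le> t0"
      then have "x < T0" using t0 by simp
      then show "((\<lambda>t. z t + c*t) has_real_derivative z' x + c) (at x)"
        using dz by (auto intro!: derivative_eq_intros)
      show "z' x + c \<le> 0" using zd[OF x] by simp
    qed
    moreover have "c * s = c*t0 - (2*\<bar>Bz\<bar> + 1)" unfolding s_def using cp by (simp add: field_simps)
    ultimately have "z s \<ge> z t0 + (2*\<bar>Bz\<bar> + 1)" by linarith
    moreover have "\<bar>z t0\<bar> \<le> Bz" "\<bar>z s\<bar> \<le> Bz" using zb t0 st by auto
    ultimately show False by linarith
  qed
  then have "exp (al*t0) * (z' t0 + H/al) \<ge> 0" unfolding P_def by (simp add: algebra_simps)
  then have "z' t0 + H/al \<ge> 0" by (simp add: zero_le_mult_iff)
  then show ?thesis by simp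
qed



theorem lemma4p5:
  fixes N :: nat and p T :: real and y y' y'' :: "real \<Rightarrow> real"
  assumes "N \<ge> 3" and "p > p_S N"
    and "\<And>t. t < T \<Longrightarrow> (y has_real_derivative y' t) (at t)"
    and "\<And>t. t < T \<Longrightarrow> (y' has_real_derivative y'' t) (at t)"
    and "\<And>t. t < T \<Longrightarrow> y t > 0"
    and "\<And>t. t < T \<Longrightarrow> y'' t + alpha N p * y' t - y t + y t powr p
               - (mconst N p)\<^sup>2 * exp (2 * mconst N p * t) * y t = 0"
    and "(y \<longlongrightarrow> 1) at_bot"
  shows "(\<lambda>t. y' t - mconst N p / (2 * (real N - 1) - 3 * theta p) * exp (2 * mconst N p * t))
           \<in> O[at_bot](\<lambda>t. exp (2 * mconst N p * (1 + min (p - 1) 1) * t))"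
proof -
  define m where "m = mconst N p"
  define al where "al = alpha N p"
  define th where "th = theta p"
  define be where "be = p - 1"
  define D where "D = th * (real N - 2 - th)"
  have N3: "real N \<ge> 3" using assms(1) by simp
  have pS: "p > (real N + 2) / (real N - 2)" using assms(2) unfolding p_S_def .
  have N2: "real N - 2 > 0" using N3 by simp
  have pN: "p * (real N - 2) > real N + 2" using pS N2 by (simp add: pos_divide_less_eq)
  have p1: "p > 1"
  proof -
    have "(real N + 2) / (real N - 2) > 1" using N2 by (simp add: field_simps)
    then show ?thesis using pS by simp
  qed
  have bepos: "be > 0" unfolding be_def using p1 by simp
  have thpos: "th > 0" unfolding th_def theta_def using p1 by simp
  have thbe: "th * be = 2" unfolding th_def theta_def be_def using p1 by (simp add: field_simps)
  have thlt: "2 * th < real N - 2"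
  proof -
    have "(p - 1) * (real N - 2) > 4" using pN by (simp add: algebra_simps)
    then have "4 / (p - 1) < real N - 2" using p1 by (simp add: divide_less_eq mult.commute)
    then show ?thesis unfolding th_def theta_def by simp
  qed
  have Dpos: "D > 0" unfolding D_def using thpos thlt by simp
  have mdef: "m = D powr (-1/2)" unfolding m_def mconst_def D_def th_def by simp
  have mpos: "m > 0" unfolding mdef using Dpos by simp
  have m2D: "m^2 * D = 1"
  proof -
    have "m^2 = D powr (-1/2) * D powr (-1/2)" unfolding mdef by (simp add: power2_eq_square)
    also have "\<dots> = D powr (-1)" using Dpos by (simp add: powr_add[symmetric])
    also have "\<dots> = 1 / D" using Dpos by (simp add: powr_minus_divide)
    finally show ?thesis using Dpos by simp
  qed
  have alpos: "al > 0" unfolding al_def alpha_def m_def[symmetric] th_def[symmetric]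
    using mpos thlt by simp
  have e3: "2 * m^2 * (real N - 2 - th) = be"
  proof -
    have "th * (2 * m^2 * (real N - 2 - th)) = 2 * (m^2 * D)" unfolding D_def by (simp add: algebra_simps)
    also have "\<dots> = th * be" using m2D thbe by simp
    finally show ?thesis using thpos by simp
  qed
  define Dn where "Dn = 4*m^2 + 2*m*al + be"
  have Dnpos: "Dn > 0" unfolding Dn_def using mpos alpos bepos by (simp add: add_pos_pos)
  define Q where "Q = 2 * (real N - 1) - 3 * th"
  have Qpos: "Q > 0" unfolding Q_def using thlt N3 by simp
  have DnQ: "Dn = 2 * m^2 * Q"
  proof -
    have "Dn - 2*m^2*Q = be - 2 * m^2 * (real N - 2 - th)"
      unfolding Dn_def Q_def al_def alpha_def m_def[symmetric] th_def[symmetric]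
      by (simp add: algebra_simps power2_eq_square)
    then show ?thesis using e3 by simp
  qed
  define a where "a = m^2 / Dn"
  have coef: "mconst N p / (2 * (real N - 1) - 3 * theta p) = 2 * m * a"
    unfolding m_def[symmetric] th_def[symmetric] Q_def[symmetric] a_def DnQ
    using mpos Qpos by (simp add: field_simps power2_eq_square)
  have aeq: "a * Dn = m^2" unfolding a_def using Dnpos by simp
  have eqn: "y'' t + al * y' t = y t - y t powr p + m^2 * exp (2*m*t) * y t" if "t < T" for t
    using assms(6)[OF that] unfolding al_def m_def by linarith
  define Kr where "Kr = p * (p - 1) * ((1/2) powr (p-2) + (3/2) powr (p-2))"
  have Krpos: "Kr > 0" unfolding Kr_def using p1 by (intro mult_pos_pos add_pos_pos) auto
  define \<eta> where "\<eta> = eta0 al be"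
  have etapos: "\<eta> > 0" unfolding \<eta>_def using eta0_pos alpos bepos by simp
  obtain T1 where T1: "\<And>t. t \<le> T1 \<Longrightarrow> dist (y t) 1 < 1/2"
    using tendstoD[OF assms(7), of "1/2"] unfolding eventually_at_bot_linorder by auto
  obtain T2 where T2: "\<And>t. t \<le> T2 \<Longrightarrow> dist (y t) 1 < \<eta> / Kr"
    using tendstoD[OF assms(7), of "\<eta>/Kr"] etapos Krpos unfolding eventually_at_bot_linorder by auto
  define T0 where "T0 = min (min T 0) (min T1 T2)"
  have T0: "T0 \<le> 0" "T0 \<le> T" "T0 \<le> T1" "T0 \<le> T2" unfolding T0_def by auto
  have yb: "1/2 \<le> y t" "y t \<le> 3/2" "\<bar>y t - 1\<bar> < \<eta>/Kr" "\<bar>y t - 1\<bar> \<le> 1/2" if "t < T0" for t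
  proof -
    have "\<bar>y t - 1\<bar> < 1/2" "\<bar>y t - 1\<bar> < \<eta>/Kr" using T1[of t] T2[of t] that T0 by (auto simp: dist_real_def)
    then show "1/2 \<le> y t" "y t \<le> 3/2" "\<bar>y t - 1\<bar> < \<eta>/Kr" "\<bar>y t - 1\<bar> \<le> 1/2" by linarith+
  qed
  have epsb: "0 < exp (2*m*t)" "exp (2*m*t) \<le> 1" if "t < T0" for t
  proof -
    show "0 < exp (2*m*t)" by simp
    have "2*m*t \<le> 0" using that T0 mpos by (intro mult_nonneg_nonpos) auto
    then show "exp (2*m*t) \<le> 1" by simp
  qed
  have dy: "(y has_real_derivative y' t) (at t)" "(y' has_real_derivative y'' t) (at t)" if "t < T0" for t
    using assms(3,4) that T0 by auto
  define R where "R t = y t powr p - 1 - p * (y t - 1)" for t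
  have Rb: "\<bar>R t\<bar> \<le> Kr * (y t - 1)^2" if "t < T0" for t
    unfolding R_def Kr_def using R_bound[OF p1 yb(1,2)[OF that]] .
  define H where "H = 3/2 + (3/2) powr p + m^2 * (3/2)"
  have Hnn: "H \<ge> 0" unfolding H_def by simp
  have hb: "\<bar>y'' t + al * y' t\<bar> \<le> H" if t: "t < T0" for t
  proof -
    have f1: "y t powr p \<le> (3/2) powr p" using yb[OF t] p1 by (intro powr_mono2) auto
    have f2: "0 \<le> y t powr p" by simp
    have f3: "m^2 * exp (2*m*t) * y t \<le> m^2 * 1 * (3/2)"
      using yb[OF t] epsb[OF t] by (intro mult_mono) auto
    have f4: "0 \<le> m^2 * exp (2*m*t) * y t" using yb[OF t] by simp
    have f5: "1/2 \<le> y t" "y t \<le> 3/2" using yb[OF t] by auto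
    show ?thesis unfolding eqn[OF less_le_trans[OF t T0(2)]] H_def abs_le_iff
      using f1 f2 f3 f4 f5 by linarith
  qed
  have y'b: "\<bar>y' t\<bar> \<le> H/al" if t: "t < T0" for t
  proof -
    have l: "y' t \<ge> -H/al"
    proof (rule dbound_lower[OF alpos T0(1) Hnn dy(1) dy(2) _ _ t, where Bz=2])
      fix s assume s: "s < T0"
      show "y'' s + al * y' s \<ge> -H" using hb[OF s] by (simp add: abs_le_iff)
      show "\<bar>y s\<bar> \<le> 2" using yb(1,2)[OF s] by simp
    qed
    have "-y' t \<ge> -H/al"
    proof (rule dbound_lower[OF alpos T0(1) Hnn _ _ _ _ t, where z="\<lambda>t. - y t" and Bz=2])
      fix s assume s: "s < T0"
      show "((\<lambda>t. - y t) has_real_derivative - y' s) (at s)" using dy(1)[OF s] by (auto intro!: derivative_eq_intros)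
      show "((\<lambda>t. - y' t) has_real_derivative - y'' s) (at s)" using dy(2)[OF s] by (auto intro!: derivative_eq_intros)
      show "- y'' s + al * - y' s \<ge> -H" using hb[OF s] by (simp add: abs_le_iff)
      show "\<bar>- y s\<bar> \<le> 2" using yb(1,2)[OF s] by simp
    qed
    then show ?thesis using l by (simp add: abs_le_iff)
  qed
  define g where "g t = y'' t + al * y' t + be * (y t - 1)" for t
  have gform: "g t = m^2 * exp (2*m*t) * y t - R t" if t: "t < T0" for t
    unfolding g_def R_def be_def using eqn[OF less_le_trans[OF t T0(2)]] by (simp add: algebra_simps)
  have Rsmall: "\<bar>R t\<bar> \<le> \<eta> * \<bar>y t - 1\<bar>" if t: "t < T0" for t
  proof -
    have "Kr * (y t - 1)^2 = (Kr * \<bar>y t - 1\<bar>) * \<bar>y t - 1\<bar>" by (simp add: power2_eq_square)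
    also have "\<dots> \<le> \<eta> * \<bar>y t - 1\<bar>"
    proof (rule mult_right_mono)
      have "Kr * \<bar>y t - 1\<bar> \<le> Kr * (\<eta>/Kr)" using yb(3)[OF t] Krpos by (intro mult_left_mono) auto
      then show "Kr * \<bar>y t - 1\<bar> \<le> \<eta>" using Krpos by simp
    qed simp
    finally show ?thesis using Rb[OF t] by simp
  qed
  obtain M1 where M1: "\<And>t. t < T0 \<Longrightarrow> \<bar>y t - 1\<bar> \<le> M1 * exp ((2*m) * t) \<and> \<bar>y' t\<bar> \<le> M1 * exp ((2*m) * t)"
  proof -
    have "\<exists>M. \<forall>t<T0. \<bar>y t - 1\<bar> \<le> M * exp ((2*m) * t) \<and> \<bar>y' t\<bar> \<le> M * exp ((2*m) * t)"
    proof (rule energy[OF alpos bepos, where w="\<lambda>t. y t - 1" and w'=y' and w''=y'' and g=g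
            and C="m^2 * (3/2)" and B="max (1/2) (H/al)"])
      show "0 < 2*m" using mpos by simp
      fix t assume t: "t < T0"
      show "((\<lambda>t. y t - 1) has_real_derivative y' t) (at t)" using dy(1)[OF t] by (auto intro!: derivative_eq_intros)
      show "(y' has_real_derivative y'' t) (at t)" using dy(2)[OF t] .
      show "y'' t + al * y' t + be * (y t - 1) = g t" unfolding g_def ..
      show "\<bar>y t - 1\<bar> \<le> max (1/2) (H/al)" using yb(4)[OF t] by (simp add: le_max_iff_disj)
      show "\<bar>y' t\<bar> \<le> max (1/2) (H/al)" using y'b[OF t] by simp
      have "\<bar>m^2 * exp (2*m*t) * y t\<bar> \<le> m^2 * (3/2) * exp (2*m*t)"
      proof -
        have "\<bar>m^2 * exp (2*m*t) * y t\<bar> = m^2 * exp (2*m*t) * y t" using yb[OF t] by simp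
        also have "\<dots> \<le> m^2 * exp (2*m*t) * (3/2)" using yb[OF t] by (intro mult_left_mono) auto
        finally show ?thesis by (simp add: algebra_simps)
      qed
      moreover have "\<bar>g t\<bar> \<le> \<bar>m^2 * exp (2*m*t) * y t\<bar> + \<bar>R t\<bar>" unfolding gform[OF t] by (rule abs_triangle_ineq4)
      ultimately show "\<bar>g t\<bar> \<le> m^2 * (3/2) * exp ((2*m) * t) + eta0 al be * \<bar>y t - 1\<bar>"
        using Rsmall[OF t] unfolding \<eta>_def by linarith
    qed
    then show ?thesis using that by blast
  qed
  define w where "w t = y t - 1 - a * exp (2*m*t)" for t
  define w' where "w' t = y' t - 2*m*a * exp (2*m*t)" for t
  define w'' where "w'' t = y'' t - 4*m^2*a * exp (2*m*t)" for t
  define g2 where "g2 t = w'' t + al * w' t + be * w t" for t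
  have g2form: "g2 t = m^2 * exp (2*m*t) * (y t - 1) - R t" if t: "t < T0" for t
  proof -
    have "g2 t = g t - a * Dn * exp (2*m*t)"
      unfolding g2_def g_def w_def w'_def w''_def Dn_def by (simp add: algebra_simps power2_eq_square)
    also have "\<dots> = m^2 * exp (2*m*t) * (y t - 1) - R t" unfolding aeq gform[OF t] by (simp add: algebra_simps)
    finally show ?thesis .
  qed
  define C2 where "C2 = m^2 * M1 + Kr * M1^2"
  obtain M2 where M2: "\<And>t. t < T0 \<Longrightarrow> \<bar>w t\<bar> \<le> M2 * exp ((4*m) * t) \<and> \<bar>w' t\<bar> \<le> M2 * exp ((4*m) * t)"
  proof -
    have "\<exists>M. \<forall>t<T0. \<bar>w t\<bar> \<le> M * exp ((4*m) * t) \<and> \<bar>w' t\<bar> \<le> M * exp ((4*m) * t)"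
    proof (rule energy[OF alpos bepos, where w=w and w'=w' and w''=w'' and g=g2
            and C=C2 and B="max (1/2) (H/al) + \<bar>a\<bar> + 2*m*\<bar>a\<bar>"])
      show "0 < 4*m" using mpos by simp
      fix t assume t: "t < T0"
      show "(w has_real_derivative w' t) (at t)" unfolding w_def[abs_def] w'_def
        using dy(1)[OF t] by (auto intro!: derivative_eq_intros simp: algebra_simps)
      show "(w' has_real_derivative w'' t) (at t)" unfolding w'_def[abs_def] w''_def
        using dy(2)[OF t] by (auto intro!: derivative_eq_intros simp: algebra_simps power2_eq_square)
      show "w'' t + al * w' t + be * w t = g2 t" unfolding g2_def ..
      have e1: "exp (2*m*t) \<le> 1" "exp (2*m*t) > 0" using epsb[OF t] by auto
      have "\<bar>a * exp (2*m*t)\<bar> = \<bar>a\<bar> * exp (2*m*t)" by (simp add: abs_mult)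
      also have "\<dots> \<le> \<bar>a\<bar>" using e1 by (intro mult_right_le_one_le) auto
      finally have "\<bar>a * exp (2*m*t)\<bar> \<le> \<bar>a\<bar>" .
      moreover have "\<bar>w t\<bar> \<le> \<bar>y t - 1\<bar> + \<bar>a * exp (2*m*t)\<bar>" unfolding w_def by (rule abs_triangle_ineq4)
      moreover have "0 \<le> 2*m*\<bar>a\<bar>" using mpos by simp
      moreover have "1/2 \<le> max (1/2) (H/al)" by simp
      ultimately show "\<bar>w t\<bar> \<le> max (1/2) (H/al) + \<bar>a\<bar> + 2*m*\<bar>a\<bar>" using yb(4)[OF t] by linarith
      have "\<bar>2*m*a * exp (2*m*t)\<bar> = (2*m*\<bar>a\<bar>) * exp (2*m*t)" using mpos by (simp add: abs_mult)
      also have "\<dots> \<le> 2*m*\<bar>a\<bar>" using e1 mpos by (intro mult_right_le_one_le) auto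
      finally have "\<bar>2*m*a * exp (2*m*t)\<bar> \<le> 2*m*\<bar>a\<bar>" .
      moreover have "\<bar>w' t\<bar> \<le> \<bar>y' t\<bar> + \<bar>2*m*a * exp (2*m*t)\<bar>" unfolding w'_def by (rule abs_triangle_ineq4)
      moreover have "H/al \<le> max (1/2) (H/al)" by simp
      ultimately show "\<bar>w' t\<bar> \<le> max (1/2) (H/al) + \<bar>a\<bar> + 2*m*\<bar>a\<bar>" using y'b[OF t] abs_ge_zero[of a] by linarith
      have ee: "exp ((4*m) * t) = exp (2*m*t) * exp (2*m*t)" by (simp add: exp_add[symmetric])
      have u1: "\<bar>y t - 1\<bar> \<le> M1 * exp (2*m*t)" using M1[OF t] by simp
      have A: "\<bar>m^2 * exp (2*m*t) * (y t - 1)\<bar> \<le> m^2 * M1 * exp ((4*m) * t)"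
      proof -
        have "\<bar>m^2 * exp (2*m*t) * (y t - 1)\<bar> = m^2 * exp (2*m*t) * \<bar>y t - 1\<bar>" by (simp add: abs_mult)
        also have "\<dots> \<le> m^2 * exp (2*m*t) * (M1 * exp (2*m*t))" using u1 by (intro mult_left_mono) auto
        finally show ?thesis unfolding ee by (simp add: algebra_simps)
      qed
      have B: "\<bar>R t\<bar> \<le> Kr * M1^2 * exp ((4*m) * t)"
      proof -
        have "(y t - 1)^2 \<le> (M1 * exp (2*m*t))^2"
          using u1 by (metis abs_ge_zero power2_abs power_mono)
        then have "Kr * (y t - 1)^2 \<le> Kr * (M1 * exp (2*m*t))^2" using Krpos by (intro mult_left_mono) auto
        then show ?thesis using Rb[OF t] unfolding ee by (simp add: power2_eq_square algebra_simps)
      qed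
      have "0 \<le> eta0 al be * \<bar>w t\<bar>" using etapos unfolding \<eta>_def by simp
      moreover have "\<bar>g2 t\<bar> \<le> \<bar>m^2 * exp (2*m*t) * (y t - 1)\<bar> + \<bar>R t\<bar>" unfolding g2form[OF t] by (rule abs_triangle_ineq4)
      moreover have "C2 * exp ((4*m) * t) = m^2 * M1 * exp ((4*m) * t) + Kr * M1^2 * exp ((4*m) * t)"
        unfolding C2_def by (simp add: algebra_simps)
      ultimately show "\<bar>g2 t\<bar> \<le> C2 * exp ((4*m) * t) + eta0 al be * \<bar>w t\<bar>"
        using A B by linarith
    qed
    then show ?thesis using that by blast
  qed
  define \<nu> where "\<nu> = min (p - 1) 1"
  show ?thesis unfolding coef
  proof (rule bigoI[where c="max M2 0"])
    show "eventually (\<lambda>t. norm (y' t - 2*m*a * exp (2 * mconst N p * t))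
            \<le> max M2 0 * norm (exp (2 * mconst N p * (1 + min (p - 1) 1) * t))) at_bot"
    proof (rule eventually_at_bot_linorderI[where c="T0 - 1"])
      fix t assume "t \<le> T0 - 1"
      then have t: "t < T0" by simp
      have "\<bar>w' t\<bar> \<le> M2 * exp ((4*m) * t)" using M2[OF t] by simp
      also have "\<dots> \<le> max M2 0 * exp ((4*m) * t)" by (intro mult_right_mono) auto
      also have "\<dots> \<le> max M2 0 * exp (2 * m * (1 + \<nu>) * t)"
      proof (intro mult_left_mono)
        have "\<nu> \<le> 1" unfolding \<nu>_def by simp
        then have "0 \<le> 4*m - 2*m*(1+\<nu>)" using mpos by (simp add: algebra_simps)
        then have "(4*m - 2*m*(1+\<nu>)) * t \<le> 0" using t T0 by (intro mult_nonneg_nonpos) auto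
        then show "exp ((4*m) * t) \<le> exp (2 * m * (1 + \<nu>) * t)" by (simp add: algebra_simps)
      qed simp
      finally show "norm (y' t - 2*m*a * exp (2 * mconst N p * t))
            \<le> max M2 0 * norm (exp (2 * mconst N p * (1 + min (p - 1) 1) * t))"
        unfolding w'_def \<nu>_def m_def by simp
    qed
  qed
qed


end
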